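(* The symmetric non-reciprocal cataclysmic quarrel rule is supremely non-monotonic: for every integer $k\ge0$ there exist $n\ge3$, distinct players $i,j\in[n]$ and a monotonic game $\mathcal W$ on $[n]$ such that the game $\hat{\mathcal W}$ obtained by imposing a symmetric non-reciprocal cataclysmic quarrel of $i$ against $j$ is not $k$-monotonic.
   Context: Players are $[n]=\{1,\dots,n\}$. A binary voting game on $[n]$ is identified with its collection $\mathcal W\subseteq 2^{[n]}$ of winning sets ($S\in\mathcal W$ means the division in which exactly the members of $S$ vote YES has outcome YES). It is monotonic if $T\subseteq S$ and $T\in\mathcal W$ imply $S\in\mathcal W$. For an integer $k\ge0$, a game $\mathcal W$ is $k$-monotonic if for every $S\subseteq[n]$ with $S\notin\mathcal W$ and every proper subset $T\subsetneq S$ there exists $K$ with $|K|\le k$ such that $T\setminus K\notin\mathcal W$. Symmetric non-reciprocal cataclysmic quarrel of $i$ against $j$: for every $S\subseteq[n]\setminus\{i,j\}$, $S\cup\{i,j\}\in\hat{\mathcal W}\iff \{j\}\in\mathcal W$; $S\in\hat{\mathcal W}\iff [n]\setminus\{j\}\in\mathcal W$; $S\cup\{i\}\in\hat{\mathcal W}\iff S\cup\{i\}\in\mathcal W$; $S\cup\{j\}\in\hat{\mathcal W}\iff S\cup\{j\}\in\mathcal W$. *)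

theory Defs
  imports Main
begin

definition game :: "nat \<Rightarrow> nat set set \<Rightarrow> bool" where
  "game n W \<longleftrightarrow> W \<subseteq> Pow {1..n}"

definition monotonic :: "nat \<Rightarrow> nat set set \<Rightarrow> bool" where
  "monotonic n W \<longleftrightarrow>
     (\<forall>S T. S \<subseteq> {1..n} \<longrightarrow> T \<subseteq> S \<longrightarrow> T \<in> W \<longrightarrow> S \<in> W)"

definition k_monotonic :: "nat \<Rightarrow> nat \<Rightarrow> nat set set \<Rightarrow> bool" where
  "k_monotonic k n W \<longleftrightarrow>
     (\<forall>S T. S \<subseteq> {1..n} \<longrightarrow> S \<notin> W \<longrightarrow> T \<subset> S \<longrightarrow>
        (\<exists>K. finite K \<and> card K \<le> k \<and> T - K \<notin> W))"

definition quarrel :: "nat \<Rightarrow> nat \<Rightarrow> nat \<Rightarrow> nat set set \<Rightarrow> nat set set" where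
  "quarrel n i j W = {S. S \<subseteq> {1..n} \<and>
     (if i \<in> S \<and> j \<in> S then {j} \<in> W
      else if i \<notin> S \<and> j \<notin> S then {1..n} - {j} \<in> W
      else S \<in> W)}"

end

theory Submission
  imports Defs
begin

theorem theorem13:
  shows "\<forall>k::nat. \<exists>n i j W. n \<ge> 3 \<and> i \<in> {1..n} \<and> j \<in> {1..n} \<and> i \<noteq> j \<and>
           game n W \<and> monotonic n W \<and> \<not> k_monotonic k n (quarrel n i j W)"
proof
  fix k :: nat
  define n where "n = k + 3"
  define W where "W = {A. A \<subseteq> {1..n} \<and> card A \<ge> 2}"
  have g: "game n W" unfolding game_def W_def by auto
  have m: "monotonic n W" unfolding monotonic_def
  proof (intro allI impI)
    fix S T assume S: "S \<subseteq> {1..n}" and TS: "T \<subseteq> S" and TW: "T \<in> W"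
    have "finite S" using S finite_subset by blast
    hence "card T \<le> card S" using card_mono TS by blast
    with TW S show "S \<in> W" unfolding W_def by simp
  qed
  have cT: "card {2..n} = k + 2" unfolding n_def by simp
  have nk: "\<not> k_monotonic k n (quarrel n 1 2 W)"
    unfolding k_monotonic_def
  proof
    assume H: "\<forall>S T. S \<subseteq> {1..n} \<longrightarrow> S \<notin> quarrel n 1 2 W \<longrightarrow> T \<subset> S \<longrightarrow>
        (\<exists>K. finite K \<and> card K \<le> k \<and> T - K \<notin> quarrel n 1 2 W)"
    have "{1..n} \<notin> quarrel n 1 2 W"
      unfolding quarrel_def W_def n_def by auto
    moreover have "{2..n} \<subset> {1..n}" unfolding n_def by auto
    ultimately obtain K where K: "finite K" "card K \<le> k" "{2..n} - K \<notin> quarrel n 1 2 W"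
      using H by blast
    have c1: "card ({2..n} - K) \<ge> 2"
    proof -
      have "card {2..n} - card K \<le> card ({2..n} - K)"
        using diff_card_le_card_Diff[OF K(1)] .
      thus ?thesis using cT K(2) by linarith
    qed
    have c2: "card ({1..n} - {2}) \<ge> 2" unfolding n_def by simp
    have "{2..n} - K \<in> quarrel n 1 2 W"
      unfolding quarrel_def W_def using c1 c2 by auto
    with K(3) show False by blast
  qed
  show "\<exists>n i j W. n \<ge> 3 \<and> i \<in> {1..n} \<and> j \<in> {1..n} \<and> i \<noteq> j \<and>
           game n W \<and> monotonic n W \<and> \<not> k_monotonic k n (quarrel n i j W)"
    apply (rule exI[of _ n], rule exI[of _ 1], rule exI[of _ 2], rule exI[of _ W])
    using g m nk unfolding n_def by auto
qed

end
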